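(* Let $\mathcal{F}$ be an $N$-dimensional commutative algebra with basis $e_1,\dots,e_N$ and structure constants $a^k_{ij}$, such that $e_1$ is a unity element and $\mathcal{F}$ carries a non-degenerate symmetric inner product $\langle\,,\rangle$ with components $\eta_{ij}$ satisfying the Frobenius condition $\langle a\circ b,c\rangle=\langle a,b\circ c\rangle$. Let $h^{(3)}=\frac{1}{6}a_{ijk}u^iu^ju^k$ and $h^{(4)}=a^i_{jk}u^ju^k\,\partial h^{(3)}/\partial u^i$. Then $h^{(4)}$ is a conserved density if and only if $\mathcal{F}$ is a Jordan algebra.
   Context: Summation over repeated indices is understood; indices are raised and lowered with $\eta_{ij}$ and its inverse, so $a_{ijk}=\eta_{ir}a^r_{jk}$ (totally symmetric by the Frobenius condition). A conserved density is a function $h(u^1,\dots,u^N)$ satisfying, for all $k,p$, $a^i_{jk}u^j\,\partial^2 h/\partial u^i\partial u^p=a^i_{jp}u^j\,\partial^2 h/\partial u^i\partial u^k$. A commutative algebra is Jordan if $(x\circ y)\circ(x\circ x)=x\circ(y\circ(x\circ x))$ for all $x,y$. *)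

theory Defs
  imports "HOL-Analysis.Analysis"
begin

text \<open>Points u = (u^1,...,u^N) are functions from a finite index type 'n to real.
  Structure constants: a k i j stands for a^k_{ij}; metric: eta i j stands for eta_{ij}.\<close>

definition partial :: "'n \<Rightarrow> (('n \<Rightarrow> real) \<Rightarrow> real) \<Rightarrow> ('n \<Rightarrow> real) \<Rightarrow> real" where
  "partial i f u = deriv (\<lambda>t. f (u(i := t))) (u i)"

definition lowered :: "('n::finite \<Rightarrow> 'n \<Rightarrow> real) \<Rightarrow> ('n \<Rightarrow> 'n \<Rightarrow> 'n \<Rightarrow> real) \<Rightarrow> 'n \<Rightarrow> 'n \<Rightarrow> 'n \<Rightarrow> real" where
  "lowered eta a i j k = (\<Sum>r\<in>UNIV. eta i r * a r j k)"

definition alg_mult :: "('n::finite \<Rightarrow> 'n \<Rightarrow> 'n \<Rightarrow> real) \<Rightarrow> ('n \<Rightarrow> real) \<Rightarrow> ('n \<Rightarrow> real) \<Rightarrow> ('n \<Rightarrow> real)" where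
  "alg_mult a x y = (\<lambda>k. \<Sum>i\<in>UNIV. \<Sum>j\<in>UNIV. a k i j * x i * y j)"

definition is_jordan :: "('n::finite \<Rightarrow> 'n \<Rightarrow> 'n \<Rightarrow> real) \<Rightarrow> bool" where
  "is_jordan a \<longleftrightarrow> (\<forall>x y. alg_mult a (alg_mult a x y) (alg_mult a x x)
                         = alg_mult a x (alg_mult a y (alg_mult a x x)))"

definition h3 :: "('n::finite \<Rightarrow> 'n \<Rightarrow> real) \<Rightarrow> ('n \<Rightarrow> 'n \<Rightarrow> 'n \<Rightarrow> real) \<Rightarrow> ('n \<Rightarrow> real) \<Rightarrow> real" where
  "h3 eta a u = (1/6) * (\<Sum>i\<in>UNIV. \<Sum>j\<in>UNIV. \<Sum>k\<in>UNIV. lowered eta a i j k * u i * u j * u k)"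

definition h4 :: "('n::finite \<Rightarrow> 'n \<Rightarrow> real) \<Rightarrow> ('n \<Rightarrow> 'n \<Rightarrow> 'n \<Rightarrow> real) \<Rightarrow> ('n \<Rightarrow> real) \<Rightarrow> real" where
  "h4 eta a u = (\<Sum>i\<in>UNIV. \<Sum>j\<in>UNIV. \<Sum>k\<in>UNIV. a i j k * u j * u k * partial i (h3 eta a) u)"

definition conserved_density :: "('n::finite \<Rightarrow> 'n \<Rightarrow> 'n \<Rightarrow> real) \<Rightarrow> (('n \<Rightarrow> real) \<Rightarrow> real) \<Rightarrow> bool" where
  "conserved_density a h \<longleftrightarrow> (\<forall>u k p.
     (\<Sum>i\<in>UNIV. \<Sum>j\<in>UNIV. a i j k * u j * partial i (partial p h) u)
   = (\<Sum>i\<in>UNIV. \<Sum>j\<in>UNIV. a i j p * u j * partial i (partial k h) u))"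

end

theory Submission
  imports Defs
begin

definition ipr :: "('n::finite \<Rightarrow> 'n \<Rightarrow> real) \<Rightarrow> ('n \<Rightarrow> real) \<Rightarrow> ('n \<Rightarrow> real) \<Rightarrow> real" where
  "ipr eta x y = (\<Sum>i\<in>UNIV. \<Sum>j\<in>UNIV. x i * eta i j * y j)"

definition ev :: "'n \<Rightarrow> 'n \<Rightarrow> real" where "ev p = (\<lambda>j. if j = p then 1 else 0)"

definition vderiv :: "(real \<Rightarrow> 'n \<Rightarrow> real) \<Rightarrow> ('n \<Rightarrow> real) \<Rightarrow> real \<Rightarrow> bool" where
  "vderiv V V' t \<longleftrightarrow> (\<forall>k. ((\<lambda>s. V s k) has_real_derivative V' k) (at t))"

lemma ipr_lin2: "ipr eta c (x::'n::finite \<Rightarrow> real) = (\<Sum>i\<in>UNIV. x i * ipr eta c (ev i))"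
  unfolding ipr_def ev_def
  by (simp add: sum_distrib_left sum_distrib_right mult.commute mult.left_commute if_distrib sum.If_cases cong: if_cong) (subst sum.swap, simp add: mult_ac)

lemma ipr_add1: "ipr eta (\<lambda>k. x k + y k) z = ipr eta x z + ipr eta y z"
  unfolding ipr_def by (simp add: algebra_simps sum.distrib)
lemma ipr_add2: "ipr eta z (\<lambda>k. x k + y k) = ipr eta z x + ipr eta z y"
  unfolding ipr_def by (simp add: algebra_simps sum.distrib)
lemma ipr_ev: "ipr eta (ev p) y = (\<Sum>j\<in>UNIV. eta p j * y j)"
proof -
  have "\<And>i. (\<Sum>j\<in>UNIV. (if i = p then 1 else 0) * eta i j * y j) = (if i = p then (\<Sum>j\<in>UNIV. eta p j * y j) else 0)"
    by auto
  then show ?thesis unfolding ipr_def ev_def by simp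
qed

lemma vderiv_upd: "vderiv (\<lambda>t. u(p:=t)) (ev p) t"
  unfolding vderiv_def ev_def by (auto intro!: derivative_eq_intros)
lemma vderiv_const: "vderiv (\<lambda>t. c) (\<lambda>k. 0) t"
  unfolding vderiv_def by (auto intro!: derivative_eq_intros)

lemma vderiv_mult:
  assumes "vderiv V V' t" "vderiv W W' t"
  shows "vderiv (\<lambda>s. alg_mult a (V s) (W s)) (\<lambda>k. alg_mult a V' (W t) k + alg_mult a (V t) W' k) t"
  using assms unfolding vderiv_def alg_mult_def
  by (auto intro!: derivative_eq_intros simp: sum.distrib[symmetric] algebra_simps)

lemma deriv_ipr:
  assumes "vderiv V V' t" "vderiv W W' t"
  shows "((\<lambda>s. ipr eta (V s) (W s)) has_real_derivative (ipr eta V' (W t) + ipr eta (V t) W')) (at t)"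
  using assms unfolding vderiv_def ipr_def
  by (auto intro!: derivative_eq_intros simp: sum.distrib[symmetric] algebra_simps)

lemma sum4_perm: "(\<Sum>r\<in>A. \<Sum>k\<in>B. \<Sum>i\<in>C. \<Sum>j\<in>D. f r k i j) = (\<Sum>i\<in>C. \<Sum>j\<in>D. \<Sum>k\<in>B. \<Sum>r\<in>A. f r k i j)"
proof -
  have "(\<Sum>r\<in>A. \<Sum>k\<in>B. \<Sum>i\<in>C. \<Sum>j\<in>D. f r k i j) = (\<Sum>k\<in>B. \<Sum>r\<in>A. \<Sum>i\<in>C. \<Sum>j\<in>D. f r k i j)" by (rule sum.swap)
  also have "\<dots> = (\<Sum>k\<in>B. \<Sum>i\<in>C. \<Sum>r\<in>A. \<Sum>j\<in>D. f r k i j)" by (intro sum.cong refl sum.swap)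
  also have "\<dots> = (\<Sum>k\<in>B. \<Sum>i\<in>C. \<Sum>j\<in>D. \<Sum>r\<in>A. f r k i j)" by (intro sum.cong refl sum.swap)
  also have "\<dots> = (\<Sum>i\<in>C. \<Sum>k\<in>B. \<Sum>j\<in>D. \<Sum>r\<in>A. f r k i j)" by (rule sum.swap)
  also have "\<dots> = (\<Sum>i\<in>C. \<Sum>j\<in>D. \<Sum>k\<in>B. \<Sum>r\<in>A. f r k i j)" by (intro sum.cong refl sum.swap)
  finally show ?thesis .
qed

lemma sum3_perm: "(\<Sum>r\<in>A. \<Sum>j\<in>B. \<Sum>k\<in>C. f r j k) = (\<Sum>j\<in>B. \<Sum>k\<in>C. \<Sum>r\<in>A. f r j k)"
proof -
  have "(\<Sum>r\<in>A. \<Sum>j\<in>B. \<Sum>k\<in>C. f r j k) = (\<Sum>j\<in>B. \<Sum>r\<in>A. \<Sum>k\<in>C. f r j k)" by (rule sum.swap)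
  also have "\<dots> = (\<Sum>j\<in>B. \<Sum>k\<in>C. \<Sum>r\<in>A. f r j k)" by (intro sum.cong refl sum.swap)
  finally show ?thesis .
qed

locale frob =
  fixes a :: "'n::finite \<Rightarrow> 'n \<Rightarrow> 'n \<Rightarrow> real" and eta :: "'n \<Rightarrow> 'n \<Rightarrow> real"
  assumes comm: "\<And>k i j. a k i j = a k j i"
    and eta_sym: "\<And>i j. eta i j = eta j i"
    and frobenius: "\<And>i j k. (\<Sum>r\<in>UNIV. a r i j * eta r k) = (\<Sum>r\<in>UNIV. eta i r * a r j k)"
begin

abbreviation M where "M \<equiv> alg_mult a"
abbreviation ip where "ip \<equiv> ipr eta"

lemma M_comm: "M x y = M y x"
  unfolding alg_mult_def by (rule ext, subst sum.swap) (simp add: comm mult_ac)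

lemma ip_sym: "ip x y = ip y x"
  unfolding ipr_def by (subst sum.swap) (simp add: eta_sym mult_ac)

lemma ip_frob: "ip (M x y) z = ip x (M y z)"
proof -
  have "ip (M x y) z = (\<Sum>i\<in>UNIV. \<Sum>j\<in>UNIV. \<Sum>k\<in>UNIV. x i * y j * z k * (\<Sum>r\<in>UNIV. a r i j * eta r k))"
    unfolding ipr_def alg_mult_def
    apply (simp add: sum_distrib_left sum_distrib_right)
    apply (subst sum4_perm) apply (simp add: mult_ac)
    done
  also have "\<dots> = (\<Sum>i\<in>UNIV. \<Sum>j\<in>UNIV. \<Sum>k\<in>UNIV. x i * y j * z k * (\<Sum>r\<in>UNIV. eta i r * a r j k))"
    by (simp add: frobenius)
  also have "\<dots> = ip x (M y z)"
    unfolding ipr_def alg_mult_def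
    apply (simp add: sum_distrib_left sum_distrib_right)
    apply (rule sym, rule sum.cong[OF refl], subst sum3_perm) apply (simp add: mult_ac)
    done
  finally show ?thesis .
qed

lemma ip_frob': "ip x (M y z) = ip (M x y) z" by (simp add: ip_frob)

lemma M_add2: "M x (\<lambda>k. y k + z k) = (\<lambda>k. M x y k + M x z k)"
  unfolding alg_mult_def by (simp add: algebra_simps sum.distrib)

lemma M_scal2[simp]: "M x (\<lambda>k. c * y k) = (\<lambda>k. c * M x y k)"
  unfolding alg_mult_def by (simp add: algebra_simps sum_distrib_left)
lemma ip_scal2[simp]: "ip x (\<lambda>k. c * y k) = c * ip x y"
  unfolding ipr_def by (simp add: algebra_simps sum_distrib_left)

lemma ip_zero1: "ip (\<lambda>k. 0) x = 0" unfolding ipr_def by simp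

lemma ip_diff2: "ip z (\<lambda>k. x k - y k) = ip z x - ip z y"
  unfolding ipr_def by (simp add: algebra_simps sum_subtractf)

lemma ipr_lin1: "ip x y = (\<Sum>i\<in>UNIV. x i * ip (ev i) y)"
  by (subst ip_sym, subst ipr_lin2) (simp add: ip_sym)

lemma M_ev: "M u (ev k) i = (\<Sum>j\<in>UNIV. a i j k * u j)"
proof -
  have "\<And>j. (\<Sum>l\<in>UNIV. a i j l * u j * (if l = k then 1 else 0)) = a i j k * u j"
    by (simp add: if_distrib cong: if_cong)
  then show ?thesis unfolding alg_mult_def ev_def by simp
qed

lemma h3_eq: "h3 eta a u = 1/6 * ip u (M u u)"
  unfolding h3_def ipr_def alg_mult_def lowered_def
  apply (simp add: sum_distrib_left sum_distrib_right)
  apply (rule sum.cong[OF refl])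
  apply (rule sym, subst sum3_perm) apply (simp add: mult_ac)
  done

lemma partial_h3: "partial p (h3 eta a) u = 1/2 * ip (ev p) (M u u)"
proof -
  have d: "((\<lambda>t. 1/6 * ip (u(p:=t)) (M (u(p:=t)) (u(p:=t)))) has_real_derivative
     1/6 * (ip (ev p) (M (u(p:=u p)) (u(p:=u p))) + ip (u(p:=u p)) (\<lambda>k. M (ev p) (u(p:=u p)) k + M (u(p:=u p)) (ev p) k))) (at (u p))"
    by (intro DERIV_cmult deriv_ipr vderiv_upd vderiv_mult)
  have "ip u (\<lambda>k. M (ev p) u k + M u (ev p) k) = 2 * ip (ev p) (M u u)"
    by (simp add: ipr_add2 M_comm[of "ev p"] ip_frob' ip_sym[of _ "ev p"])
  with d have "((\<lambda>t. h3 eta a (u(p:=t))) has_real_derivative 1/2 * ip (ev p) (M u u)) (at (u p))"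
    by (simp add: h3_eq)
  then show ?thesis unfolding partial_def by (rule DERIV_imp_deriv)
qed

lemma h4_eq: "h4 eta a u = 1/2 * ip (M u u) (M u u)"
proof -
  have hh: "\<And>i c. (\<Sum>j\<in>UNIV. \<Sum>k\<in>UNIV. a i j k * u j * u k * c) = M u u i * c"
    by (simp add: alg_mult_def sum_distrib_left sum_distrib_right mult_ac)
  have "h4 eta a u = (\<Sum>i\<in>UNIV. M u u i * (1/2 * ip (ev i) (M u u)))"
    unfolding h4_def partial_h3 hh by simp
  also have "\<dots> = 1/2 * ip (M u u) (M u u)"
    by (subst (2) ipr_lin1) (simp add: sum_distrib_left mult_ac)
  finally show ?thesis .
qed

lemma partial_h4: "partial p (h4 eta a) u = 2 * ip (ev p) (M u (M u u))"
proof -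
  have d: "((\<lambda>t. 1/2 * ip (M (u(p:=t)) (u(p:=t))) (M (u(p:=t)) (u(p:=t)))) has_real_derivative
     1/2 * (ip (\<lambda>k. M (ev p) (u(p:=u p)) k + M (u(p:=u p)) (ev p) k) (M (u(p:=u p)) (u(p:=u p))) + ip (M (u(p:=u p)) (u(p:=u p))) (\<lambda>k. M (ev p) (u(p:=u p)) k + M (u(p:=u p)) (ev p) k))) (at (u p))"
    by (intro DERIV_cmult deriv_ipr vderiv_upd vderiv_mult)
  have "(\<lambda>k. M (ev p) u k + M u (ev p) k) = (\<lambda>k. 2 * M u (ev p) k)" by (simp add: M_comm[of "ev p"])
  then have "ip (M u u) (\<lambda>k. M (ev p) u k + M u (ev p) k) = 2 * ip (M u u) (M u (ev p))" by simp
  also have "ip (M u u) (M u (ev p)) = ip (M (M u u) u) (ev p)" by (rule ip_frob')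
  also have "\<dots> = ip (ev p) (M (M u u) u)" by (rule ip_sym)
  also have "\<dots> = ip (ev p) (M u (M u u))" by (simp only: M_comm[of "M u u" u])
  finally have "ip (M u u) (\<lambda>k. M (ev p) u k + M u (ev p) k) = 2 * ip (ev p) (M u (M u u))" .
  with d have "((\<lambda>t. h4 eta a (u(p:=t))) has_real_derivative 2 * ip (ev p) (M u (M u u))) (at (u p))"
    by (simp add: h4_eq ip_sym[of "\<lambda>k. _ k + _ k"])
  then show ?thesis unfolding partial_def by (rule DERIV_imp_deriv)
qed

lemma partial_h4_2: "partial i (partial p (h4 eta a)) u = 2 * ip (ev p) (M (ev i) (M u u)) + 4 * ip (ev p) (M u (M u (ev i)))"
proof -
  have e: "partial p (h4 eta a) = (\<lambda>v. 2 * ip (ev p) (M v (M v v)))"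
    by (rule ext, rule partial_h4)
  have d: "((\<lambda>t. 2 * ip (ev p) (M (u(i:=t)) (M (u(i:=t)) (u(i:=t))))) has_real_derivative
     2 * (ip (\<lambda>k. 0) (M (u(i:=u i)) (M (u(i:=u i)) (u(i:=u i)))) + ip (ev p) (\<lambda>k. M (ev i) (M (u(i:=u i)) (u(i:=u i))) k + M (u(i:=u i)) (\<lambda>k. M (ev i) (u(i:=u i)) k + M (u(i:=u i)) (ev i) k) k))) (at (u i))"
    by (intro DERIV_cmult deriv_ipr vderiv_upd vderiv_mult vderiv_const)
  then have "((\<lambda>t. partial p (h4 eta a) (u(i:=t))) has_real_derivative 2 * ip (ev p) (M (ev i) (M u u)) + 4 * ip (ev p) (M u (M u (ev i)))) (at (u i))"
    by (simp add: e ip_zero1 ipr_add2 M_add2 M_comm[of "ev i"])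
  then show ?thesis unfolding partial_def by (rule DERIV_imp_deriv)
qed

lemma cond_LHS: "(\<Sum>i\<in>UNIV. \<Sum>j\<in>UNIV. a i j k * u j * partial i (partial p (h4 eta a)) u)
   = 2 * ip (ev p) (M (M u u) (M u (ev k))) + 4 * ip (M u (ev p)) (M u (M u (ev k)))"
proof -
  have s1: "\<And>i X. (\<Sum>j\<in>UNIV. a i j k * u j * X) = M u (ev k) i * X"
    by (simp add: M_ev sum_distrib_right)
  have t1: "\<And>i. ip (ev p) (M (ev i) (M u u)) = ip (M (ev p) (M u u)) (ev i)"
  proof -
    fix i
    have "M (ev i) (M u u) = M (M u u) (ev i)" by (rule M_comm)
    then show "ip (ev p) (M (ev i) (M u u)) = ip (M (ev p) (M u u)) (ev i)" by (simp only: ip_frob')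
  qed
  have t2: "\<And>i. ip (ev p) (M u (M u (ev i))) = ip (M (M (ev p) u) u) (ev i)"
    by (simp only: ip_frob')
  have "(\<Sum>i\<in>UNIV. \<Sum>j\<in>UNIV. a i j k * u j * partial i (partial p (h4 eta a)) u)
     = (\<Sum>i\<in>UNIV. M u (ev k) i * (2 * ip (M (ev p) (M u u)) (ev i) + 4 * ip (M (M (ev p) u) u) (ev i)))"
    unfolding partial_h4_2 s1 t1 t2 ..
  also have "\<dots> = 2 * (\<Sum>i\<in>UNIV. M u (ev k) i * ip (M (ev p) (M u u)) (ev i)) + 4 * (\<Sum>i\<in>UNIV. M u (ev k) i * ip (M (M (ev p) u) u) (ev i))"
    by (simp add: algebra_simps sum.distrib sum_distrib_left)
  also have "\<dots> = 2 * ip (M (ev p) (M u u)) (M u (ev k)) + 4 * ip (M (M (ev p) u) u) (M u (ev k))"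
    by (simp only: ipr_lin2[symmetric])
  also have "\<dots> = 2 * ip (ev p) (M (M u u) (M u (ev k))) + 4 * ip (M u (ev p)) (M u (M u (ev k)))"
    by (simp only: ip_frob M_comm[of "ev p" u])
  finally show ?thesis .
qed

lemma T_sym: "ip (M u (ev p)) (M u (M u (ev k))) = ip (M u (ev k)) (M u (M u (ev p)))"
proof -
  have "ip (M u (ev k)) (M u (M u (ev p))) = ip (M (M u (ev k)) u) (M u (ev p))" by (rule ip_frob')
  also have "\<dots> = ip (M u (ev p)) (M (M u (ev k)) u)" by (rule ip_sym)
  also have "\<dots> = ip (M u (ev p)) (M u (M u (ev k)))" by (simp only: M_comm[of "M u (ev k)" u])
  finally show ?thesis by simp
qed

lemma cross: "ip (ev k) (M (M u u) (M u (ev p))) = ip (ev p) (M u (M (ev k) (M u u)))"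
proof -
  have "ip (ev k) (M (M u u) (M u (ev p))) = ip (M (ev k) (M u u)) (M u (ev p))" by (rule ip_frob')
  also have "\<dots> = ip (M u (ev p)) (M (ev k) (M u u))" by (rule ip_sym)
  also have "\<dots> = ip (M (ev p) u) (M (ev k) (M u u))" by (simp only: M_comm[of u "ev p"])
  also have "\<dots> = ip (ev p) (M u (M (ev k) (M u u)))" by (rule ip_frob)
  finally show ?thesis .
qed

lemma conserved_iff: "conserved_density a (h4 eta a) \<longleftrightarrow>
  (\<forall>u k p. ip (ev p) (M (M u u) (M u (ev k))) = ip (ev p) (M u (M (ev k) (M u u))))"
proof -
  have "\<And>u k p. ((\<Sum>i\<in>UNIV. \<Sum>j\<in>UNIV. a i j k * u j * partial i (partial p (h4 eta a)) u)
   = (\<Sum>i\<in>UNIV. \<Sum>j\<in>UNIV. a i j p * u j * partial i (partial k (h4 eta a)) u)) \<longleftrightarrow>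
    ip (ev p) (M (M u u) (M u (ev k))) = ip (ev p) (M u (M (ev k) (M u u)))"
  proof -
    fix u k p
    note e1 = cond_LHS[of k u p] and e2 = cond_LHS[of p u k] and c = cross[of k u p] and t = T_sym[of u p k]
    show "?thesis u k p" by (simp only: e1 e2 c t) simp
  qed
  then show ?thesis unfolding conserved_density_def by blast
qed

lemma lin_a: "ip z (M s (M x w)) = ip (M (M z s) x) w" by (simp only: ip_frob')
lemma lin_b: "ip z (M x (M w s)) = ip (M (M z x) s) w" by (simp only: ip_frob' M_comm[of w s])

end

theorem proposition2:
  fixes a :: "'n::finite \<Rightarrow> 'n \<Rightarrow> 'n \<Rightarrow> real"
    and eta :: "'n \<Rightarrow> 'n \<Rightarrow> real"
    and e1 :: 'n
  assumes comm: "\<And>k i j. a k i j = a k j i"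
    and unity: "\<And>k i. a k e1 i = (if k = i then 1 else 0)"
    and eta_sym: "\<And>i j. eta i j = eta j i"
    and eta_nondeg: "\<And>v. (\<forall>j. (\<Sum>i\<in>UNIV. eta i j * v i) = 0) \<Longrightarrow> (\<forall>i. v i = 0)"
    and frobenius: "\<And>i j k. (\<Sum>r\<in>UNIV. a r i j * eta r k) = (\<Sum>r\<in>UNIV. eta i r * a r j k)"
  shows "conserved_density a (h4 eta a) \<longleftrightarrow> is_jordan a"
proof -
  interpret F: frob a eta
    by standard (rule comm, rule eta_sym, rule frobenius)
  let ?M = "alg_mult a" and ?ip = "ipr eta"
  show ?thesis unfolding F.conserved_iff
  proof
    assume H: "\<forall>u k p. ?ip (ev p) (?M (?M u u) (?M u (ev k))) = ?ip (ev p) (?M u (?M (ev k) (?M u u)))"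
    show "is_jordan a" unfolding is_jordan_def
    proof (intro allI)
      fix x y :: "'n \<Rightarrow> real"
      define v where "v = (\<lambda>i. ?M (?M x y) (?M x x) i - ?M x (?M y (?M x x)) i)"
      have "\<forall>j. (\<Sum>i\<in>UNIV. eta i j * v i) = 0"
      proof
        fix j
        have "(\<Sum>i\<in>UNIV. eta i j * v i) = ?ip (ev j) v" by (simp add: ipr_ev eta_sym)
        also have "\<dots> = ?ip (ev j) (?M (?M x y) (?M x x)) - ?ip (ev j) (?M x (?M y (?M x x)))"
          unfolding v_def by (rule F.ip_diff2)
        also have "?ip (ev j) (?M (?M x y) (?M x x)) = ?ip (ev j) (?M (?M x x) (?M x y))"
          by (simp only: F.M_comm[of "?M x y"])
        also have "\<dots> = ?ip (?M (?M (ev j) (?M x x)) x) y" by (rule F.lin_a)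
        also have "\<dots> = (\<Sum>k\<in>UNIV. y k * ?ip (?M (?M (ev j) (?M x x)) x) (ev k))" by (rule ipr_lin2)
        also have "\<dots> = (\<Sum>k\<in>UNIV. y k * ?ip (ev j) (?M x (?M (ev k) (?M x x))))"
        proof (rule sum.cong[OF refl])
          fix k
          have "?ip (?M (?M (ev j) (?M x x)) x) (ev k) = ?ip (ev j) (?M (?M x x) (?M x (ev k)))"
            by (rule F.lin_a[symmetric])
          also have "\<dots> = ?ip (ev j) (?M x (?M (ev k) (?M x x)))" using H by blast
          finally show "y k * ?ip (?M (?M (ev j) (?M x x)) x) (ev k) = y k * ?ip (ev j) (?M x (?M (ev k) (?M x x)))" by simp
        qed
        also have "?ip (ev j) (?M x (?M y (?M x x))) = ?ip (?M (?M (ev j) x) (?M x x)) y" by (rule F.lin_b)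
        also have "\<dots> = (\<Sum>k\<in>UNIV. y k * ?ip (?M (?M (ev j) x) (?M x x)) (ev k))" by (rule ipr_lin2)
        also have "\<dots> = (\<Sum>k\<in>UNIV. y k * ?ip (ev j) (?M x (?M (ev k) (?M x x))))"
          by (simp only: F.lin_b)
        finally show "(\<Sum>i\<in>UNIV. eta i j * v i) = 0" by simp
      qed
      then have "\<forall>i. v i = 0" by (rule eta_nondeg)
      then show "?M (?M x y) (?M x x) = ?M x (?M y (?M x x))"
        unfolding v_def by auto
    qed
  next
    assume J: "is_jordan a"
    show "\<forall>u k p. ?ip (ev p) (?M (?M u u) (?M u (ev k))) = ?ip (ev p) (?M u (?M (ev k) (?M u u)))"
    proof (intro allI)
      fix u k p
      have "?M (?M u u) (?M u (ev k)) = ?M (?M u (ev k)) (?M u u)" by (rule F.M_comm)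
      also have "\<dots> = ?M u (?M (ev k) (?M u u))" using J unfolding is_jordan_def by blast
      finally show "?ip (ev p) (?M (?M u u) (?M u (ev k))) = ?ip (ev p) (?M u (?M (ev k) (?M u u)))" by simp
    qed
  qed
qed

end
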